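(* Let $P=\{x\in\mathbb{R}^n:\tilde A x+\tilde b\ge 0\}$ be a polyhedron (with $\tilde A\in\mathbb{R}^{p\times n}$, $\tilde b\in\mathbb{R}^p$) having at least two non-parallel linear boundaries, i.e. its boundary contains facets lying in two non-parallel hyperplanes. Then the indicator function $\mathbb{1}_P$ cannot be expressed on $\mathbb{R}^n$ by any discrete-time LIF-SNN with a single time step ($T=1$) and only one hidden (spike) layer ($L=1$), neither with spike output nor with membrane potential output.
   Context: With $T=1$, $L=1$, direct encoding and input $x\in\mathbb{R}^n$, a discrete-time LIF-SNN computes the spike vector $s^1=H(Wx+b')$ for some $W\in\mathbb{R}^{m\times n}$, $b'\in\mathbb{R}^m$ (the bias absorbing the initial potential and threshold terms), where $H$ is the entrywise Heaviside function ($H(z)=1$ iff $z\ge 0$). With spike output (which requires $m=1$) the realization is $x\mapsto H(\langle w,x\rangle+b')$; with membrane potential output the realization is $x\mapsto w_0+\sum_{i=1}^m v_i H(\langle w_i,x\rangle+b'_i)$ for arbitrary $w_0,v_1,\dots,v_m\in\mathbb{R}$. The indicator function $\mathbb{1}_P$ equals $1$ on $P$ and $0$ on $\mathbb{R}^n\setminus P$. *)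

theory Defs
  imports "HOL-Analysis.Analysis"
begin

definition heaviside :: "real \<Rightarrow> real" where
  "heaviside z = (if z \<ge> 0 then 1 else 0)"

definition polyhedron_of :: "real^'n^'p \<Rightarrow> real^'p \<Rightarrow> (real^'n) set" where
  "polyhedron_of A b = {x. \<forall>i. (A *v x + b) $ i \<ge> 0}"

definition has_two_nonparallel_boundaries :: "(real^'n) set \<Rightarrow> bool" where
  "has_two_nonparallel_boundaries P \<longleftrightarrow>
     (\<exists>F1 F2 a1 c1 a2 c2.
        F1 facet_of P \<and> F2 facet_of P \<and> F1 \<subseteq> frontier P \<and> F2 \<subseteq> frontier P \<and>
        a1 \<noteq> 0 \<and> a2 \<noteq> 0 \<and>
        affine hull F1 = {x. a1 \<bullet> x = c1} \<and> affine hull F2 = {x. a2 \<bullet> x = c2} \<and>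
        \<not> (\<exists>k. a2 = k *\<^sub>R a1))"

text \<open>Realization of a LIF-SNN with T = 1, L = 1, direct encoding, spike output
  (one output spike neuron): x |-> H(<w,x> + b').\<close>
definition snn_T1L1_spike_realizable :: "(real^'n \<Rightarrow> real) \<Rightarrow> bool" where
  "snn_T1L1_spike_realizable f \<longleftrightarrow>
     (\<exists>w b'. \<forall>x. f x = heaviside (w \<bullet> x + b'))"

text \<open>Realization with membrane potential output:
  x |-> w0 + sum_{i<m} v_i H(<w_i,x> + b'_i), hidden width m arbitrary.\<close>
definition snn_T1L1_membrane_realizable :: "(real^'n \<Rightarrow> real) \<Rightarrow> bool" where
  "snn_T1L1_membrane_realizable f \<longleftrightarrow>
     (\<exists>(m::nat) (W::nat \<Rightarrow> real^'n) (b'::nat \<Rightarrow> real) (w0::real) (v::nat \<Rightarrow> real).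
        \<forall>x. f x = w0 + (\<Sum>i<m. v i * heaviside (W i \<bullet> x + b' i)))"

end

theory Submission
  imports Defs
begin


lemma poly_eq: "polyhedron_of A b = {x. \<forall>i. A$i \<bullet> x + b$i \<ge> 0}"
  unfolding polyhedron_of_def
  by (simp add: matrix_vector_mult_def inner_vec_def mult.commute)

lemma heaviside_scale: "e > 0 \<Longrightarrow> heaviside (e * t) = heaviside t"
  by (simp add: heaviside_def zero_le_mult_iff)

lemma ev_small:
  fixes g t :: real
  assumes "g \<noteq> 0"
  shows "eventually (\<lambda>e. e > 0 \<and> e * \<bar>t\<bar> < \<bar>g\<bar>) (at_right 0)"
proof -
  have "((\<lambda>e. e * \<bar>t\<bar>) \<longlongrightarrow> 0 * \<bar>t\<bar>) (at_right (0::real))"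
    by (intro tendsto_intros)
  then have "eventually (\<lambda>e. e * \<bar>t\<bar> < \<bar>g\<bar>) (at_right (0::real))"
    using assms by (intro order_tendstoD(2)) auto
  moreover have "eventually (\<lambda>e. e > 0) (at_right (0::real))"
    by (simp add: eventually_at_right_less)
  ultimately show ?thesis by eventually_elim auto
qed

lemma heaviside_pert:
  fixes g t e :: real
  assumes "e * \<bar>t\<bar> < \<bar>g\<bar>" "e > 0"
  shows "heaviside (g + e * t) = heaviside (g - e * t)"
proof -
  have "\<bar>e*t\<bar> < \<bar>g\<bar>" using assms by (simp add: abs_mult)
  then show ?thesis unfolding heaviside_def by (auto simp: abs_if split: if_splits)
qed

lemma g_jump:
  fixes W :: "nat \<Rightarrow> real^'n" and y0 d a :: "real^'n"
  shows "\<exists>C Bad. finite Bad \<and> (\<forall>s. s \<notin> Bad \<longrightarrow> eventually (\<lambda>e.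
     (\<Sum>i<m. v i * (heaviside (W i \<bullet> (y0 + s *\<^sub>R d + e *\<^sub>R a) + c i)
                  - heaviside (W i \<bullet> (y0 + s *\<^sub>R d - e *\<^sub>R a) + c i))) = C) (at_right 0))"
proof -
  define Bad where "Bad = (\<lambda>i. - (W i \<bullet> y0 + c i) / (W i \<bullet> d)) ` {i. i<m \<and> W i \<bullet> d \<noteq> 0}"
  define T where "T = (\<lambda>i. if W i \<bullet> d = 0 \<and> W i \<bullet> y0 + c i = 0
       then v i * (heaviside (W i \<bullet> a) - heaviside (- (W i \<bullet> a))) else 0)"
  have fin: "finite Bad" unfolding Bad_def by simp
  have "\<forall>s. s \<notin> Bad \<longrightarrow> eventually (\<lambda>e.
     (\<Sum>i<m. v i * (heaviside (W i \<bullet> (y0 + s *\<^sub>R d + e *\<^sub>R a) + c i)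
                  - heaviside (W i \<bullet> (y0 + s *\<^sub>R d - e *\<^sub>R a) + c i))) = sum T {..<m}) (at_right 0)"
  proof (intro allI impI)
    fix s assume sB: "s \<notin> Bad"
    have "\<forall>i\<in>{..<m}. eventually (\<lambda>e. v i * (heaviside (W i \<bullet> (y0 + s *\<^sub>R d + e *\<^sub>R a) + c i)
                  - heaviside (W i \<bullet> (y0 + s *\<^sub>R d - e *\<^sub>R a) + c i)) = T i) (at_right 0)"
    proof
      fix i assume im: "i \<in> {..<m}"
      define g where "g = W i \<bullet> y0 + c i + s * (W i \<bullet> d)"
      have e1: "W i \<bullet> (y0 + s *\<^sub>R d + e *\<^sub>R a) + c i = g + e * (W i \<bullet> a)" for e
        unfolding g_def by (simp add: inner_add_right algebra_simps)
      have e2: "W i \<bullet> (y0 + s *\<^sub>R d - e *\<^sub>R a) + c i = g - e * (W i \<bullet> a)" for e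
        unfolding g_def by (simp add: inner_add_right inner_diff_right algebra_simps)
      show "eventually (\<lambda>e. v i * (heaviside (W i \<bullet> (y0 + s *\<^sub>R d + e *\<^sub>R a) + c i)
                  - heaviside (W i \<bullet> (y0 + s *\<^sub>R d - e *\<^sub>R a) + c i)) = T i) (at_right 0)"
      proof (cases "g = 0")
        case True
        have Z: "W i \<bullet> d = 0 \<and> W i \<bullet> y0 + c i = 0"
        proof (cases "W i \<bullet> d = 0")
          case True then show ?thesis using \<open>g = 0\<close> g_def by simp
        next
          case False
          have "s = - (W i \<bullet> y0 + c i) / (W i \<bullet> d)" using \<open>g = 0\<close> False unfolding g_def
            by (simp add: field_simps)
          then have "s \<in> Bad" unfolding Bad_def using im False by auto
          then show ?thesis using sB by simp
        qed
        have "eventually (\<lambda>e. (e::real) > 0) (at_right 0)"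
          by (simp add: eventually_at_right_less)
        then show ?thesis
        proof eventually_elim
          case (elim e)
          have "- (e * (W i \<bullet> a)) = e * (- (W i \<bullet> a))" by simp
          then show ?case unfolding e1 e2 T_def using Z True elim
            by (simp add: heaviside_scale heaviside_scale[of e "- (W i \<bullet> a)", simplified])
        qed
      next
        case False
        then have nZ: "\<not> (W i \<bullet> d = 0 \<and> W i \<bullet> y0 + c i = 0)" unfolding g_def by auto
        from ev_small[OF False, of "W i \<bullet> a"]
        show ?thesis
        proof eventually_elim
          case (elim e)
          then show ?case unfolding e1 e2 T_def using nZ heaviside_pert[of e "W i \<bullet> a" g] by auto
        qed
      qed
    qed
    from eventually_ball_finite[OF _ this]
    show "eventually (\<lambda>e.
     (\<Sum>i<m. v i * (heaviside (W i \<bullet> (y0 + s *\<^sub>R d + e *\<^sub>R a) + c i)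
                  - heaviside (W i \<bullet> (y0 + s *\<^sub>R d - e *\<^sub>R a) + c i))) = sum T {..<m}) (at_right 0)"
      by (rule eventually_mono) (auto intro: sum.cong)
  qed
  with fin show ?thesis by blast
qed



lemma Zlin:
  fixes r a k x :: "real^'n"
  assumes "\<forall>k'. a \<bullet> k' = c \<longrightarrow> r \<bullet> k' + bb = 0" "a \<bullet> k = c" "a \<noteq> 0"
  shows "r \<bullet> x + bb = (a \<bullet> (x - k) / (a \<bullet> a)) * (r \<bullet> a)"
proof -
  define t where "t = a \<bullet> (x - k) / (a \<bullet> a)"
  have aa: "a \<bullet> a \<noteq> 0" using assms(3) by simp
  have "a \<bullet> (k + ((x - k) - t *\<^sub>R a)) = c"
    using assms(2) aa unfolding t_def by (simp add: inner_add_right inner_diff_right)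
  then have "r \<bullet> (k + ((x - k) - t *\<^sub>R a)) + bb = 0" using assms(1) by blast
  then have "r \<bullet> x - t * (r \<bullet> a) + bb = 0" by (simp add: inner_add_right inner_diff_right)
  then show ?thesis unfolding t_def by simp
qed

lemma facet_jump:
  fixes A :: "real^'n^'p" and b :: "real^'p"
  assumes PD: "P = {x. \<forall>i. A$i \<bullet> x + b$i \<ge> 0}"
  assumes F: "F facet_of P" "F \<subseteq> frontier P" "a \<noteq> 0" "affine hull F = {x. a \<bullet> x = c}"
  shows "\<exists>y0 e. e > 0 \<and> y0 \<in> P \<and> a \<bullet> y0 = c \<and> (\<forall>y. a \<bullet> y = c \<and> dist y y0 < e \<longrightarrow>
      eventually (\<lambda>\<epsilon>. (y + \<epsilon> *\<^sub>R a \<in> P) \<noteq> (y - \<epsilon> *\<^sub>R a \<in> P)) (at_right 0))"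
proof -
  define K where "K = {x. a \<bullet> x = c}"
  have face: "F face_of P" and ne: "F \<noteq> {}" and dim: "aff_dim F = aff_dim P - 1"
    using F(1) unfolding facet_of_def by auto
  have FP: "F \<subseteq> P" using face face_of_imp_subset by blast
  have cF: "convex F" using face face_of_imp_convex by blast
  obtain y0 where y0r: "y0 \<in> rel_interior F" using rel_interior_eq_empty[OF cF] ne by blast
  then obtain e where e: "e > 0" "ball y0 e \<inter> K \<subseteq> F" and y0F: "y0 \<in> F"
    unfolding mem_rel_interior_ball F(4) K_def by blast
  have y0K: "y0 \<in> K" using y0F hull_subset[of F affine] F(4) K_def by blast
  have aa: "a \<bullet> a > 0" using F(3) by simp
  define Z where "Z = {i. \<forall>k. a \<bullet> k = c \<longrightarrow> A$i \<bullet> k + b$i = 0}"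
  define \<sigma> where "\<sigma> i = A$i \<bullet> a" for i
  have zl: "A$i \<bullet> x + b$i = (a \<bullet> (x - k) / (a \<bullet> a)) * \<sigma> i" if "i \<in> Z" "a \<bullet> k = c" for i x k
    using Zlin[of a c "A$i" "b$i" k x] that F(3) unfolding Z_def \<sigma>_def by blast
  have claima: "A$i \<bullet> y + b$i > 0" if iZ: "i \<notin> Z" and yK: "a \<bullet> y = c" and yd: "dist y y0 < e/2" for i y
  proof -
    have sub: "z \<in> P" if "a \<bullet> z = c" "dist y z < e/2" for z
    proof -
      have "dist y0 z < e" using yd that(2) dist_triangle[of y0 z y] by (simp add: dist_commute)
      then show ?thesis using e(2) FP that(1) unfolding K_def by auto
    qed
    have "y \<in> P" using sub[OF yK] e by simp
    then have ge: "A$i \<bullet> y + b$i \<ge> 0" using PD by auto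
    have "A$i \<bullet> y + b$i \<noteq> 0"
    proof
      assume y0: "A$i \<bullet> y + b$i = 0"
      have "A$i \<bullet> k + b$i = 0" if kK: "a \<bullet> k = c" for k
      proof (rule ccontr)
        assume nz: "A$i \<bullet> k + b$i \<noteq> 0"
        define u where "u = k - y"
        have Au: "A$i \<bullet> u \<noteq> 0" using nz y0 unfolding u_def by (simp add: inner_diff_right)
        then have un: "u \<noteq> 0" by auto
        define t where "t = e / (4 * norm u)"
        have tp: "t > 0" using e un unfolding t_def by simp
        have au: "a \<bullet> u = 0" using kK yK unfolding u_def by (simp add: inner_diff_right)
        have dd: "dist y (y + s *\<^sub>R u) < e/2" if "s = t \<or> s = -t" for s
        proof -
          have "dist y (y + s *\<^sub>R u) = \<bar>s\<bar> * norm u" by (simp add: dist_norm)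
          also have "\<dots> = e/4" using that tp un e unfolding t_def by auto
          finally show ?thesis using e by simp
        qed
        have "y + s *\<^sub>R u \<in> P" if "s = t \<or> s = -t" for s
          using sub[OF _ dd[OF that]] yK au by (simp add: inner_add_right)
        then have ge2: "A$i \<bullet> (y + s *\<^sub>R u) + b$i \<ge> 0" if "s = t \<or> s = -t" for s
          using that PD by auto
        have "s * (A$i \<bullet> u) \<ge> 0" if "s = t \<or> s = -t" for s
        proof -
          have "A$i \<bullet> (y + s *\<^sub>R u) + b$i = s * (A$i \<bullet> u)" using y0 by (simp add: inner_add_right algebra_simps)
          then show ?thesis using ge2[OF that] by simp
        qed
        from this[of t] this[of "-t"] tp Au show False
          by (simp add: zero_le_mult_iff mult_le_0_iff)
      qed
      then show False using iZ unfolding Z_def by blast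
    qed
    with ge show ?thesis by simp
  qed
  have notboth: "\<not> ((\<forall>i\<in>Z. \<sigma> i \<ge> 0) \<and> (\<forall>i\<in>Z. \<sigma> i \<le> 0))"
  proof
    assume "(\<forall>i\<in>Z. \<sigma> i \<ge> 0) \<and> (\<forall>i\<in>Z. \<sigma> i \<le> 0)"
    then have s0: "\<sigma> i = 0" if "i \<in> Z" for i using that by force
    have "\<forall>i. eventually (\<lambda>x. A$i \<bullet> x + b$i \<ge> 0) (nhds y0)"
    proof
      fix i show "eventually (\<lambda>x. A$i \<bullet> x + b$i \<ge> 0) (nhds y0)"
      proof (cases "i \<in> Z")
        case True
        then show ?thesis using zl[OF True, of y0] s0[OF True] y0K K_def by simp
      next
        case False
        have pos: "A$i \<bullet> y0 + b$i > 0" using claima[OF False] y0K e K_def by simp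
        have "((\<lambda>x. A$i \<bullet> x + b$i) \<longlongrightarrow> A$i \<bullet> y0 + b$i) (nhds y0)"
          by (intro tendsto_intros filterlim_ident)
        from order_tendstoD(1)[OF this pos] show ?thesis by (rule eventually_mono) simp
      qed
    qed
    then have "eventually (\<lambda>x. \<forall>i. A$i \<bullet> x + b$i \<ge> 0) (nhds y0)"
      by (intro eventually_all_finite) auto
    then obtain S where S: "open S" "y0 \<in> S" "\<forall>x\<in>S. \<forall>i. A$i \<bullet> x + b$i \<ge> 0"
      unfolding eventually_nhds by blast
    then have "S \<subseteq> P" using PD by auto
    then have "y0 \<in> interior P" using S by (meson interiorI)
    moreover have "y0 \<in> frontier P" using y0F F(2) by blast
    ultimately show False by (simp add: frontier_def)
  qed
  have notopp: "\<not> ((\<exists>i\<in>Z. \<sigma> i > 0) \<and> (\<exists>j\<in>Z. \<sigma> j < 0))"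
  proof
    assume "(\<exists>i\<in>Z. \<sigma> i > 0) \<and> (\<exists>j\<in>Z. \<sigma> j < 0)"
    then obtain i j where ij: "i \<in> Z" "j \<in> Z" "\<sigma> i > 0" "\<sigma> j < 0" by blast
    have "P \<subseteq> K"
    proof
      fix x assume xP: "x \<in> P"
      define t where "t = a \<bullet> (x - y0) / (a \<bullet> a)"
      have y0c: "a \<bullet> y0 = c" using y0K K_def by simp
      have xa: "\<forall>i. A$i \<bullet> x + b$i \<ge> 0" using xP PD by simp
      have "t * \<sigma> i \<ge> 0" "t * \<sigma> j \<ge> 0"
        using zl[OF ij(1) y0c, of x] zl[OF ij(2) y0c, of x] xa[rule_format, of i] xa[rule_format, of j]
        unfolding t_def by auto
      then have "t = 0" using ij(3,4)
        by (cases "t > 0"; cases "t < 0") (auto simp: zero_le_mult_iff)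
      then have "a \<bullet> (x - y0) = 0" unfolding t_def using aa by simp
      then show "x \<in> K" using y0K unfolding K_def by (simp add: inner_diff_right)
    qed
    then have "affine hull P \<subseteq> K"
      unfolding K_def by (intro hull_minimal) (auto simp: affine_hyperplane)
    moreover have "K \<subseteq> affine hull P" using F(4) hull_mono[OF FP, of affine] K_def by simp
    ultimately have "affine hull P = affine hull F" using F(4) K_def by auto
    then have "aff_dim P = aff_dim F" by (metis aff_dim_affine_hull)
    then show False using dim by simp
  qed
  have key: "(\<forall>i\<in>Z. \<sigma> i \<ge> 0) \<noteq> (\<forall>i\<in>Z. \<sigma> i \<le> 0)"
    using notboth notopp by force
  have "\<forall>y. a \<bullet> y = c \<and> dist y y0 < e/2 \<longrightarrow>
      eventually (\<lambda>\<epsilon>. (y + \<epsilon> *\<^sub>R a \<in> P) \<noteq> (y - \<epsilon> *\<^sub>R a \<in> P)) (at_right 0)"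
  proof (intro allI impI)
    fix y assume yy: "a \<bullet> y = c \<and> dist y y0 < e/2"
    have "\<forall>i. eventually (\<lambda>\<epsilon>. \<epsilon> > 0 \<and> (i \<notin> Z \<longrightarrow> A$i \<bullet> (y + \<epsilon> *\<^sub>R a) + b$i > 0 \<and> A$i \<bullet> (y - \<epsilon> *\<^sub>R a) + b$i > 0)) (at_right 0)"
    proof
      fix i
      show "eventually (\<lambda>\<epsilon>. \<epsilon> > 0 \<and> (i \<notin> Z \<longrightarrow> A$i \<bullet> (y + \<epsilon> *\<^sub>R a) + b$i > 0 \<and> A$i \<bullet> (y - \<epsilon> *\<^sub>R a) + b$i > 0)) (at_right 0)"
      proof (cases "i \<in> Z")
        case True
        then show ?thesis by (simp add: eventually_at_right_less)
      next
        case False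
        have pos: "A$i \<bullet> y + b$i > 0" using claima[OF False] yy by simp
        from ev_small[of "A$i \<bullet> y + b$i" "\<sigma> i"] pos have "\<forall>\<^sub>F e in at_right 0. 0 < e \<and> e * \<bar>\<sigma> i\<bar> < \<bar>A $ i \<bullet> y + b $ i\<bar>" by simp
        then show ?thesis
        proof (elim eventually_mono)
          fix \<epsilon> :: real assume h: "0 < \<epsilon> \<and> \<epsilon> * \<bar>\<sigma> i\<bar> < \<bar>A $ i \<bullet> y + b $ i\<bar>"
          have "\<bar>\<epsilon> * \<sigma> i\<bar> < A $ i \<bullet> y + b $ i" using h pos by (simp add: abs_mult)
          then show "\<epsilon> > 0 \<and> (i \<notin> Z \<longrightarrow> A$i \<bullet> (y + \<epsilon> *\<^sub>R a) + b$i > 0 \<and> A$i \<bullet> (y - \<epsilon> *\<^sub>R a) + b$i > 0)"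
            using h unfolding \<sigma>_def by (auto simp: inner_add_right inner_diff_right abs_less_iff)
        qed
      qed
    qed
    then have "eventually (\<lambda>\<epsilon>. \<forall>i. \<epsilon> > 0 \<and> (i \<notin> Z \<longrightarrow> A$i \<bullet> (y + \<epsilon> *\<^sub>R a) + b$i > 0 \<and> A$i \<bullet> (y - \<epsilon> *\<^sub>R a) + b$i > 0)) (at_right 0)"
      by (intro eventually_all_finite) auto
    then show "eventually (\<lambda>\<epsilon>. (y + \<epsilon> *\<^sub>R a \<in> P) \<noteq> (y - \<epsilon> *\<^sub>R a \<in> P)) (at_right 0)"
    proof (elim eventually_mono)
      fix \<epsilon> :: real
      assume h: "\<forall>i. \<epsilon> > 0 \<and> (i \<notin> Z \<longrightarrow> A$i \<bullet> (y + \<epsilon> *\<^sub>R a) + b$i > 0 \<and> A$i \<bullet> (y - \<epsilon> *\<^sub>R a) + b$i > 0)"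
      then have ep: "\<epsilon> > 0" by blast
      have zp: "A$i \<bullet> (y + \<epsilon> *\<^sub>R a) + b$i = \<epsilon> * \<sigma> i" if "i \<in> Z" for i
        using zl[OF that, of y "y + \<epsilon> *\<^sub>R a"] yy aa by simp
      have zm: "A$i \<bullet> (y - \<epsilon> *\<^sub>R a) + b$i = - (\<epsilon> * \<sigma> i)" if "i \<in> Z" for i
        using zl[OF that, of y "y - \<epsilon> *\<^sub>R a"] yy aa by simp
      have p1: "(y + \<epsilon> *\<^sub>R a \<in> P) = (\<forall>i\<in>Z. \<sigma> i \<ge> 0)"
      proof -
        have "(y + \<epsilon> *\<^sub>R a \<in> P) = (\<forall>i. A$i \<bullet> (y + \<epsilon> *\<^sub>R a) + b$i \<ge> 0)" using PD by simp
        also have "\<dots> = (\<forall>i\<in>Z. \<sigma> i \<ge> 0)"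
        proof
          assume "\<forall>i. A$i \<bullet> (y + \<epsilon> *\<^sub>R a) + b$i \<ge> 0"
          then show "\<forall>i\<in>Z. \<sigma> i \<ge> 0" using zp ep by (metis zero_le_mult_iff not_less)
        next
          assume s: "\<forall>i\<in>Z. \<sigma> i \<ge> 0"
          show "\<forall>i. A$i \<bullet> (y + \<epsilon> *\<^sub>R a) + b$i \<ge> 0"
          proof
            fix i show "A$i \<bullet> (y + \<epsilon> *\<^sub>R a) + b$i \<ge> 0"
              using s zp[of i] ep h by (cases "i \<in> Z") (auto intro: less_imp_le)
          qed
        qed
        finally show ?thesis .
      qed
      have p2: "(y - \<epsilon> *\<^sub>R a \<in> P) = (\<forall>i\<in>Z. \<sigma> i \<le> 0)"
      proof -
        have "(y - \<epsilon> *\<^sub>R a \<in> P) = (\<forall>i. A$i \<bullet> (y - \<epsilon> *\<^sub>R a) + b$i \<ge> 0)" using PD by simp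
        also have "\<dots> = (\<forall>i\<in>Z. \<sigma> i \<le> 0)"
        proof
          assume "\<forall>i. A$i \<bullet> (y - \<epsilon> *\<^sub>R a) + b$i \<ge> 0"
          then show "\<forall>i\<in>Z. \<sigma> i \<le> 0" using zm ep by (metis neg_0_le_iff_le mult_le_0_iff not_less)
        next
          assume s: "\<forall>i\<in>Z. \<sigma> i \<le> 0"
          show "\<forall>i. A$i \<bullet> (y - \<epsilon> *\<^sub>R a) + b$i \<ge> 0"
          proof
            fix i show "A$i \<bullet> (y - \<epsilon> *\<^sub>R a) + b$i \<ge> 0"
              using s zm[of i] ep h by (cases "i \<in> Z") (auto intro: less_imp_le simp: mult_le_0_iff)
          qed
        qed
        finally show ?thesis .
      qed
      show "(y + \<epsilon> *\<^sub>R a \<in> P) \<noteq> (y - \<epsilon> *\<^sub>R a \<in> P)" using p1 p2 key by simp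
    qed
  qed
  moreover have "y0 \<in> P" using y0F FP by blast
  moreover have "e/2 > 0" using e by simp
  ultimately show ?thesis using y0K K_def by blast
qed



lemma nonpar_dir:
  fixes a1 a2 :: "real^'n"
  assumes "a1 \<noteq> 0" "\<not> (\<exists>k. a2 = k *\<^sub>R a1)"
  shows "\<exists>d. a1 \<bullet> d = 0 \<and> a2 \<bullet> d \<noteq> 0"
proof -
  define \<mu> where "\<mu> = (a1 \<bullet> a2) / (a1 \<bullet> a1)"
  define d where "d = a2 - \<mu> *\<^sub>R a1"
  have aa: "a1 \<bullet> a1 \<noteq> 0" using assms(1) by simp
  have d1: "a1 \<bullet> d = 0" unfolding d_def \<mu>_def using aa by (simp add: inner_diff_right)
  have "a2 \<bullet> d \<noteq> 0"
  proof
    assume "a2 \<bullet> d = 0"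
    then have "d \<bullet> d = 0" using d1 unfolding d_def by (simp add: inner_diff_left inner_commute)
    then have "d = 0" by simp
    then have "a2 = \<mu> *\<^sub>R a1" unfolding d_def by simp
    then show False using assms(2) by blast
  qed
  with d1 show ?thesis by blast
qed

lemma K_not_sub:
  fixes A :: "real^'n^'p" and b :: "real^'p"
  assumes PD: "P = {x. \<forall>i. A$i \<bullet> x + b$i \<ge> 0}"
  assumes F1: "F1 \<noteq> {}" "affine hull F1 = {x. a1 \<bullet> x = c1}" "a1 \<noteq> 0"
  assumes F2: "F2 face_of P" "F2 \<noteq> {}" "affine hull F2 = {x. a2 \<bullet> x = c2}"
  assumes np: "\<not> (\<exists>k. a2 = k *\<^sub>R a1)"
  shows "\<exists>y1. a1 \<bullet> y1 = c1 \<and> y1 \<notin> P"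
proof (rule ccontr)
  assume "\<not> ?thesis"
  then have KP: "\<And>y. a1 \<bullet> y = c1 \<Longrightarrow> y \<in> P" by blast
  obtain d where d: "a1 \<bullet> d = 0" "a2 \<bullet> d \<noteq> 0" using nonpar_dir[OF F1(3) np] by blast
  obtain k where kK: "a1 \<bullet> k = c1" using F1(1,2) hull_subset[of F1 affine] by blast
  have Ad: "A$i \<bullet> d = 0" for i
  proof (rule ccontr)
    assume nz: "A$i \<bullet> d \<noteq> 0"
    define t where "t = - (A$i \<bullet> k + b$i + 1) / (A$i \<bullet> d)"
    have "a1 \<bullet> (k + t *\<^sub>R d) = c1" using kK d by (simp add: inner_add_right)
    then have "A$i \<bullet> (k + t *\<^sub>R d) + b$i \<ge> 0" using KP PD by auto
    moreover have "A$i \<bullet> (k + t *\<^sub>R d) + b$i = -1" using nz unfolding t_def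
      by (simp add: inner_add_right)
    ultimately show False by simp
  qed
  obtain q where q: "q \<in> F2" using F2(2) by blast
  have qP: "q \<in> P" using q F2(1) face_of_imp_subset by blast
  have pm: "q + d \<in> P" "q - d \<in> P"
    using qP Ad PD by (auto simp: inner_add_right inner_diff_right)
  have dn: "d \<noteq> 0" using d by auto
  have "q \<in> open_segment (q - d) (q + d)"
  proof -
    have "midpoint (q - d) (q + d) = q" by (simp add: midpoint_def scaleR_add_right[symmetric])
    moreover have "q - d \<noteq> q + d" 
    proof
      assume "q - d = q + d"
      then have "(q + d) - (q - d) = 0" by simp
      then have "2 *\<^sub>R d = 0" by (simp add: algebra_simps scaleR_2)
      then show False using dn by simp
    qed
    ultimately show ?thesis using midpoint_in_open_segment by metis
  qed
  then have "q - d \<in> F2 \<and> q + d \<in> F2" using F2(1) pm q unfolding face_of_def by blast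
  then have "a2 \<bullet> (q - d) = c2" "a2 \<bullet> (q + d) = c2" using F2(3) hull_subset[of F2 affine] by auto
  then have "a2 \<bullet> d = 0" by (simp add: inner_add_right inner_diff_right)
  with d show False by simp
qed

lemma leave:
  fixes A :: "real^'n^'p" and b :: "real^'p"
  assumes PD: "P = {x. \<forall>i. A$i \<bullet> x + b$i \<ge> 0}"
  assumes "y0 \<in> P" "y1 \<notin> P" "s \<ge> 1"
  shows "eventually (\<lambda>\<epsilon>. y0 + s *\<^sub>R (y1 - y0) + \<epsilon> *\<^sub>R a \<notin> P \<and> y0 + s *\<^sub>R (y1 - y0) - \<epsilon> *\<^sub>R a \<notin> P) (at_right 0)"
proof -
  obtain i where i: "A$i \<bullet> y1 + b$i < 0" using assms(3) unfolding PD by (auto simp: not_le)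
  have g0: "A$i \<bullet> y0 + b$i \<ge> 0" using assms(2) PD by auto
  define z where "z = y0 + s *\<^sub>R (y1 - y0)"
  have "A$i \<bullet> z + b$i = (A$i \<bullet> y0 + b$i) + s * ((A$i \<bullet> y1 + b$i) - (A$i \<bullet> y0 + b$i))"
    unfolding z_def by (simp add: inner_add_right inner_diff_right algebra_simps)
  also have "\<dots> \<le> A$i \<bullet> y1 + b$i"
  proof -
    have "(s - 1) * ((A$i \<bullet> y1 + b$i) - (A$i \<bullet> y0 + b$i)) \<le> 0"
      using assms(4) i g0 by (intro mult_nonneg_nonpos) auto
    then show ?thesis by (simp add: algebra_simps)
  qed
  finally have zn: "A$i \<bullet> z + b$i < 0" using i by simp
  from ev_small[of "A$i \<bullet> z + b$i" "A$i \<bullet> a"] zn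
  have "\<forall>\<^sub>F e in at_right 0. 0 < e \<and> e * \<bar>A$i \<bullet> a\<bar> < \<bar>A$i \<bullet> z + b$i\<bar>" by simp
  then show ?thesis
  proof (elim eventually_mono)
    fix e :: real assume h: "0 < e \<and> e * \<bar>A$i \<bullet> a\<bar> < \<bar>A$i \<bullet> z + b$i\<bar>"
    then have "\<bar>e * (A$i \<bullet> a)\<bar> < - (A$i \<bullet> z + b$i)" using zn by (simp add: abs_mult)
    then have "A$i \<bullet> (z + e *\<^sub>R a) + b$i < 0" "A$i \<bullet> (z - e *\<^sub>R a) + b$i < 0"
      by (auto simp: inner_add_right inner_diff_right abs_less_iff)
    then show "y0 + s *\<^sub>R (y1 - y0) + e *\<^sub>R a \<notin> P \<and> y0 + s *\<^sub>R (y1 - y0) - e *\<^sub>R a \<notin> P"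
      unfolding z_def PD by (auto simp: not_le)
  qed
qed



theorem lemmaB7:
  fixes A :: "real^'n^'p" and b :: "real^'p"
  assumes "has_two_nonparallel_boundaries (polyhedron_of A b)"
  shows "\<not> snn_T1L1_spike_realizable (indicator (polyhedron_of A b) :: real^'n \<Rightarrow> real)
       \<and> \<not> snn_T1L1_membrane_realizable (indicator (polyhedron_of A b) :: real^'n \<Rightarrow> real)"
proof -
  define P where "P = polyhedron_of A b"
  have PD: "P = {x. \<forall>i. A$i \<bullet> x + b$i \<ge> 0}" using poly_eq P_def by blast
  from assms obtain F1 F2 a1 c1 a2 c2 where H:
    "F1 facet_of P" "F2 facet_of P" "F1 \<subseteq> frontier P" "F2 \<subseteq> frontier P"
    "a1 \<noteq> 0" "a2 \<noteq> 0" "affine hull F1 = {x. a1 \<bullet> x = c1}" "affine hull F2 = {x. a2 \<bullet> x = c2}"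
    "\<not> (\<exists>k. a2 = k *\<^sub>R a1)"
    unfolding has_two_nonparallel_boundaries_def P_def by blast
  have mem: "\<not> snn_T1L1_membrane_realizable (indicator P :: real^'n \<Rightarrow> real)"
  proof
    assume "snn_T1L1_membrane_realizable (indicator P :: real^'n \<Rightarrow> real)"
    then obtain m :: nat and W b' w0 v where rep:
      "\<forall>x. (indicator P x :: real) = w0 + (\<Sum>i<m. v i * heaviside (W i \<bullet> x + b' i))"
      unfolding snn_T1L1_membrane_realizable_def by blast
    have jump: "(indicator P (x + e *\<^sub>R a1) :: real) - indicator P (x - e *\<^sub>R a1) =
      (\<Sum>i<m. v i * (heaviside (W i \<bullet> (x + e *\<^sub>R a1) + b' i) - heaviside (W i \<bullet> (x - e *\<^sub>R a1) + b' i)))" for x e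
      using rep by (simp add: sum_subtractf right_diff_distrib)
    obtain y0 e where y0: "e > 0" "y0 \<in> P" "a1 \<bullet> y0 = c1"
      "\<forall>y. a1 \<bullet> y = c1 \<and> dist y y0 < e \<longrightarrow>
      eventually (\<lambda>\<epsilon>. (y + \<epsilon> *\<^sub>R a1 \<in> P) \<noteq> (y - \<epsilon> *\<^sub>R a1 \<in> P)) (at_right 0)"
      using facet_jump[OF PD H(1) H(3) H(5) H(7)] by blast
    have F1ne: "F1 \<noteq> {}" and F2f: "F2 face_of P" "F2 \<noteq> {}" using H(1,2) unfolding facet_of_def by auto
    obtain y1 where y1: "a1 \<bullet> y1 = c1" "y1 \<notin> P"
      using K_not_sub[OF PD F1ne H(7) H(5) F2f H(8) H(9)] by blast
    define d where "d = y1 - y0"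
    obtain C Bad where CB: "finite Bad" "\<forall>s. s \<notin> Bad \<longrightarrow> eventually (\<lambda>e.
     (\<Sum>i<m. v i * (heaviside (W i \<bullet> (y0 + s *\<^sub>R d + e *\<^sub>R a1) + b' i)
                  - heaviside (W i \<bullet> (y0 + s *\<^sub>R d - e *\<^sub>R a1) + b' i))) = C) (at_right 0)"
      using g_jump[where m=m and v=v and W=W and d=d and a=a1 and c=b'] by blast
    have ad: "a1 \<bullet> d = 0" using y0(3) y1(1) unfolding d_def by (simp add: inner_diff_right)
    define \<delta> where "\<delta> = e / (norm d + 1)"
    have dp: "\<delta> > 0" using y0(1) unfolding \<delta>_def by (simp add: add_nonneg_pos)
    have "infinite ({0..\<delta>/2} - Bad)" using Diff_infinite_finite[OF CB(1)] dp by simp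
    then obtain s where s: "s \<in> {0..\<delta>/2}" "s \<notin> Bad" using infinite_imp_nonempty by (metis DiffE ex_in_conv)
    have "infinite ({1..2::real} - Bad)" using Diff_infinite_finite[OF CB(1)] by simp
    then obtain s' where s': "s' \<in> {1..2}" "s' \<notin> Bad" using infinite_imp_nonempty by (metis DiffE ex_in_conv)
    define z where "z = y0 + s *\<^sub>R d"
    have zK: "a1 \<bullet> z = c1" unfolding z_def using y0(3) ad by (simp add: inner_add_right)
    have "dist z y0 = s * norm d" unfolding z_def using s(1) by (simp add: dist_norm)
    also have "\<dots> \<le> (\<delta>/2) * norm d" using s(1) by (intro mult_right_mono) auto
    also have "\<dots> < e"
    proof -
      have np: "norm d + 1 > 0" by (simp add: add_nonneg_pos)
      have "e * norm d \<le> e * (norm d + 1)" using y0(1) by simp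
      then have "\<delta> * norm d \<le> e" unfolding \<delta>_def using np
        by (simp add: pos_divide_le_eq)
      moreover have "\<delta>/2 * norm d = (\<delta> * norm d)/2" by simp
      ultimately show ?thesis using y0(1) by linarith
    qed
    finally have zd: "dist z y0 < e" .
    have ev1: "eventually (\<lambda>\<epsilon>. (z + \<epsilon> *\<^sub>R a1 \<in> P) \<noteq> (z - \<epsilon> *\<^sub>R a1 \<in> P)) (at_right 0)"
      using y0(4) zK zd by blast
    have ev2: "eventually (\<lambda>\<epsilon>. (\<Sum>i<m. v i * (heaviside (W i \<bullet> (z + \<epsilon> *\<^sub>R a1) + b' i)
                  - heaviside (W i \<bullet> (z - \<epsilon> *\<^sub>R a1) + b' i))) = C) (at_right 0)"
      using CB(2) s(2) unfolding z_def by blast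
    have "eventually (\<lambda>\<epsilon>. C \<noteq> 0) (at_right (0::real))"
      using ev1 ev2
    proof eventually_elim
      case (elim \<epsilon>)
      then have "(indicator P (z + \<epsilon> *\<^sub>R a1) :: real) - indicator P (z - \<epsilon> *\<^sub>R a1) \<noteq> 0"
        by (auto simp: indicator_def)
      then show ?case using jump[of z \<epsilon>] elim(2) by simp
    qed
    then have C0: "C \<noteq> 0" using eventually_happens[of _ "at_right (0::real)"] by auto
    define z' where "z' = y0 + s' *\<^sub>R d"
    have ev3: "eventually (\<lambda>\<epsilon>. z' + \<epsilon> *\<^sub>R a1 \<notin> P \<and> z' - \<epsilon> *\<^sub>R a1 \<notin> P) (at_right 0)"
      using leave[OF PD y0(2) y1(2), of s' a1] s'(1) unfolding z'_def d_def by auto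
    have ev4: "eventually (\<lambda>\<epsilon>. (\<Sum>i<m. v i * (heaviside (W i \<bullet> (z' + \<epsilon> *\<^sub>R a1) + b' i)
                  - heaviside (W i \<bullet> (z' - \<epsilon> *\<^sub>R a1) + b' i))) = C) (at_right 0)"
      using CB(2) s'(2) unfolding z'_def by blast
    have "eventually (\<lambda>\<epsilon>. C = 0) (at_right (0::real))"
      using ev3 ev4
    proof eventually_elim
      case (elim \<epsilon>)
      then have "(indicator P (z' + \<epsilon> *\<^sub>R a1) :: real) - indicator P (z' - \<epsilon> *\<^sub>R a1) = 0"
        by (auto simp: indicator_def)
      then show ?case using jump[of z' \<epsilon>] elim(2) by simp
    qed
    then have "C = 0" using eventually_happens[of _ "at_right (0::real)"] by auto
    with C0 show False by simp
  qed
  have spk: "\<not> snn_T1L1_spike_realizable (indicator P :: real^'n \<Rightarrow> real)"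
  proof
    assume "snn_T1L1_spike_realizable (indicator P :: real^'n \<Rightarrow> real)"
    then obtain w c where wc: "\<forall>x. (indicator P x :: real) = heaviside (w \<bullet> x + c)"
      unfolding snn_T1L1_spike_realizable_def by blast
    have "snn_T1L1_membrane_realizable (indicator P :: real^'n \<Rightarrow> real)"
      unfolding snn_T1L1_membrane_realizable_def
      by (rule exI[of _ 1], rule exI[of _ "\<lambda>_. w"], rule exI[of _ "\<lambda>_. c"], rule exI[of _ 0],
          rule exI[of _ "\<lambda>_. 1"]) (simp add: wc)
    with mem show False by simp
  qed
  show ?thesis using mem spk unfolding P_def by blast
qed


end
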